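(* Let $s>0$ and let $P:[0,\infty)\to\mathbb{R}$ be a $\mathcal{C}^2$ function with $P(x)>0$ for all $x>0$. Consider, for $x_0>0$ and $\gamma_0>0$, the initial value problem \[ \frac{d\gamma_1}{dx}=\frac{\gamma_1(x)+\gamma_1(x)^2-P(x)}{s\,x\,\gamma_1(x)},\qquad \gamma_1(x_0)=\gamma_0 . \] Then there exist positive global solutions of this initial value problem (i.e. there exist $x_0>0$ and $\gamma_0>0$ such that the solution exists and remains strictly positive for all $x\ge x_0$) if and only if \[ \int_{x_0}^{\infty}\frac{P(z)}{z^{1+2/s}}\,dz<\infty \] for some $x_0>0$.
   Context: Solutions are understood in the region $x>0$, $\gamma_1>0$, where the right-hand side is regular; for given initial data the solution is the unique maximal solution taking values in $(0,\infty)$. A solution is called global (for $x\to\infty$) if it can be continued, remaining strictly positive, to all $x\ge x_0$. *)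

theory Defs
  imports "HOL-Analysis.Analysis"
begin

definition C2_on_nonneg :: "(real \<Rightarrow> real) \<Rightarrow> bool" where
  "C2_on_nonneg P \<longleftrightarrow> (\<exists>P1 P2.
     (\<forall>x\<ge>0. (P has_real_derivative P1 x) (at x within {0..})) \<and>
     (\<forall>x\<ge>0. (P1 has_real_derivative P2 x) (at x within {0..})) \<and>
     continuous_on {0..} P2)"

definition ode_rhs :: "real \<Rightarrow> (real \<Rightarrow> real) \<Rightarrow> real \<Rightarrow> real \<Rightarrow> real" where
  "ode_rhs s P x g = (g + g^2 - P x) / (s * x * g)"

definition global_pos_solution ::
  "real \<Rightarrow> (real \<Rightarrow> real) \<Rightarrow> real \<Rightarrow> (real \<Rightarrow> real) \<Rightarrow> bool" where
  "global_pos_solution s P x0 g \<longleftrightarrow>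
     (\<forall>x\<ge>x0. g x > 0 \<and>
        (g has_real_derivative ode_rhs s P x (g x)) (at x within {x0..}))"

end

theory Submission
  imports Defs
begin


lemma at_Ici_eq: "(t::real) \<ge> a \<Longrightarrow> at t within {a..t+1} = at t within {a..}"
  by (rule at_within_nhd[where S="{t - 1 <..< t + 1}"]) auto

lemma indef_deriv:
  fixes h :: "real \<Rightarrow> real"
  assumes "continuous_on {a..} h" "t \<ge> a"
  shows "((\<lambda>x. integral {a..x} h) has_real_derivative h t) (at t within {a..})"
proof -
  have c: "continuous_on {a..t+1} h" using assms(1) by (rule continuous_on_subset) auto
  have "((\<lambda>x. integral {a..x} h) has_real_derivative h t) (at t within {a..t+1})"
    by (rule integral_has_real_derivative[OF c]) (use assms(2) in simp)
  thus ?thesis by (simp only: at_Ici_eq[OF assms(2)])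
qed

lemma deriv_at_interior:
  fixes f :: "real \<Rightarrow> real"
  assumes "(f has_real_derivative D) (at t within {a..})" "a < t"
  shows "(f has_real_derivative D) (at t)"
proof -
  have "(f has_real_derivative D) (at t within {a<..})"
    by (rule has_field_derivative_subset[OF assms(1)]) auto
  moreover have "at t within {a<..} = at t" 
    by (rule at_within_open) (use assms(2) in auto)
  ultimately show ?thesis by simp
qed

lemma mono_from_deriv:
  fixes f f' :: "real \<Rightarrow> real"
  assumes "\<And>t. t \<ge> a \<Longrightarrow> (f has_real_derivative f' t) (at t within {a..})"
    and "\<And>t. t \<ge> a \<Longrightarrow> f' t \<ge> 0" and "a \<le> b"
  shows "f a \<le> f b"
proof (rule DERIV_nonneg_imp_increasing_open[OF assms(3)])
  fix x assume "a < x" "x < b"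
  thus "\<exists>y. DERIV f x :> y \<and> 0 \<le> y"
    using assms(1,2) deriv_at_interior[of f "f' x" x a] by force
next
  have "continuous_on {a..} f" by (rule DERIV_continuous_on) (use assms(1) in auto)
  thus "continuous_on {a..b} f" by (rule continuous_on_subset) auto
qed

lemma nonneg_integrable_Ici:
  fixes h :: "real \<Rightarrow> real"
  assumes cont: "continuous_on {a..} h" and nn: "\<And>x. x \<ge> a \<Longrightarrow> h x \<ge> 0"
    and bd: "\<And>y. y \<ge> a \<Longrightarrow> integral {a..y} h \<le> C"
  shows "h integrable_on {a..}"
proof -
  have int: "h integrable_on {a..y}" for y
  proof (cases "a \<le> y")
    case True
    have "continuous_on {a..y} h" using cont by (rule continuous_on_subset) auto
    thus ?thesis by (rule integrable_continuous_interval)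
  next
    case False thus ?thesis by (simp add: integrable_on_empty) 
  qed
  define f where "f \<equiv> \<lambda>n x. if x \<in> {a..of_nat n} then h x else 0"
  have has_integral_f: "\<And>n. (f n has_integral (integral {a..of_nat n} h)) {a..}"
    unfolding f_def
    by (metis (no_types, lifting) ext Icc_subset_Ici_iff order.refl
        has_integral_restrict int integrable_integral)
  have "h integrable_on {a..} \<and> (\<lambda>k. integral {a..} (f k)) \<longlonglongrightarrow> integral {a..} h"
  proof (rule monotone_convergence_increasing)
    fix n
    show "f n integrable_on {a..}"
      using has_integral_f by blast
  next
    fix n x assume "x \<in> {a..}"
    then show "f n x \<le> f (Suc n) x" using nn by (auto simp: f_def)
  next
    fix x :: real assume x: "x \<in> {a..}"
    have "eventually (\<lambda>n. real n \<ge> x) at_top"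
      by (meson eventually_sequentiallyI nat_ceiling_le_eq)
    with x have "eventually (\<lambda>n. f n x = h x) at_top"
      by (simp add: eventually_mono f_def)
    thus "(\<lambda>n. f n x) \<longlonglongrightarrow> h x" by (simp add: tendsto_eventually)
  next
    have "norm (integral {a..} (f n)) \<le> max C 0" for n
    proof (cases "a \<le> real n")
      case True
      have "integral {a..real n} h \<ge> 0"
        by (rule integral_nonneg) (use int nn in auto)
      moreover have "integral {a..real n} h \<le> C" using bd True by auto
      ultimately show ?thesis using has_integral_f[of n] by (simp add: integral_unique)
    next
      case False
      hence "integral {a..real n} h = 0" by simp
      thus ?thesis using has_integral_f[of n] by (simp add: integral_unique)
    qed
    thus "bounded (range(\<lambda>k. integral {a..} (f k)))"
      by (metis (no_types, lifting) boundedI rangeE)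
  qed
  thus ?thesis by blast
qed




lemma cont_int_Icc:
  fixes h :: "real \<Rightarrow> real"
  assumes "continuous_on {a..} h"
  shows "h integrable_on {a..b}"
proof -
  have "continuous_on {a..b} h" using assms by (rule continuous_on_subset) auto
  thus ?thesis by (rule integrable_continuous_interval)
qed

lemma ode_exists:
  fixes F :: "real \<Rightarrow> real \<Rightarrow> real" and L :: "real \<Rightarrow> real"
  assumes Fc: "continuous_on ({x0..} \<times> UNIV) (\<lambda>(t,u). F t u)"
    and Lc: "continuous_on {x0..} L"
    and L0: "\<And>t. t \<ge> x0 \<Longrightarrow> L t \<ge> 0"
    and Lip: "\<And>t u v. t \<ge> x0 \<Longrightarrow> \<bar>F t u - F t v\<bar> \<le> L t * \<bar>u - v\<bar>"
    and Gr: "\<And>t u. t \<ge> x0 \<Longrightarrow> \<bar>F t u\<bar> \<le> L t * (1 + \<bar>u\<bar>)"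
  shows "\<exists>g. g x0 = y0 \<and> (\<forall>t\<ge>x0. (g has_real_derivative F t (g t)) (at t within {x0..}))"
proof -
  define \<Lambda> where "\<Lambda> t = integral {x0..t} L" for t
  have \<Lambda>d: "(\<Lambda> has_real_derivative L t) (at t within {x0..})" if "t \<ge> x0" for t
    unfolding \<Lambda>_def by (rule indef_deriv[OF Lc that])
  have \<Lambda>c: "continuous_on {x0..} \<Lambda>"
    by (rule DERIV_continuous_on) (use \<Lambda>d in auto)
  have \<Lambda>0: "\<Lambda> x0 = 0" unfolding \<Lambda>_def by simp
  have \<Lambda>nn: "\<Lambda> t \<ge> 0" if "t \<ge> x0" for t
    unfolding \<Lambda>_def by (rule integral_nonneg) (use cont_int_Icc[OF Lc] L0 in auto)
  define E where "E t = exp (2 * \<Lambda> t)" for t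
  have Epos: "E t > 0" for t unfolding E_def by simp
  have Ege: "E t \<ge> 1" if "t \<ge> x0" for t unfolding E_def using \<Lambda>nn[OF that] by simp
  have \<Lambda>E: "\<Lambda> t \<le> E t" if "t \<ge> x0" for t
  proof -
    have "1 + 2 * \<Lambda> t \<le> E t" unfolding E_def by (rule exp_ge_add_one_self)
    thus ?thesis using \<Lambda>nn[OF that] by simp
  qed
  have Ed: "((\<lambda>t. E t / 2) has_real_derivative L t * E t) (at t within {x0..})" if "t \<ge> x0" for t
    unfolding E_def using \<Lambda>d[OF that]
    by (auto intro!: derivative_eq_intros)
  have Ec: "continuous_on {x0..} E"
    by (rule DERIV_continuous_on[where D="\<lambda>t. 2 * L t * E t"]) 
       (unfold E_def, auto intro!: derivative_eq_intros \<Lambda>d)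
  have LEc: "continuous_on {x0..} (\<lambda>t. L t * E t)"
    by (intro continuous_intros Lc Ec)
  have intLE: "integral {x0..t} (\<lambda>\<tau>. L \<tau> * E \<tau>) = (E t - 1) / 2" if "t \<ge> x0" for t
  proof -
    have "((\<lambda>\<tau>. L \<tau> * E \<tau>) has_integral (E t / 2 - E x0 / 2)) {x0..t}"
    proof (rule fundamental_theorem_of_calculus[OF that])
      fix x assume x: "x \<in> {x0..t}"
      have "((\<lambda>t. E t / 2) has_real_derivative L x * E x) (at x within {x0..t})"
        by (rule has_field_derivative_subset[OF Ed]) (use x in auto)
      thus "((\<lambda>t. E t / 2) has_vector_derivative L x * E x) (at x within {x0..t})"
        by (simp add: has_real_derivative_iff_has_vector_derivative)
    qed
    moreover have "E x0 = 1" unfolding E_def \<Lambda>0 by simp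
    ultimately show ?thesis by (simp add: integral_unique field_simps)
  qed
  define G where "G k \<tau> = F \<tau> (E \<tau> * apply_bcontfun k \<tau>)" for k :: "real \<Rightarrow>\<^sub>C real" and \<tau>
  have Gc: "continuous_on {x0..} (G k)" for k
  proof -
    have "continuous_on {x0..} (\<lambda>\<tau>. (\<lambda>(t,u). F t u) (\<tau>, E \<tau> * apply_bcontfun k \<tau>))"
      by (rule continuous_on_compose2[OF Fc]) (auto intro!: continuous_intros Ec)
    thus ?thesis unfolding G_def by simp
  qed
  define R where "R k t = (y0 + integral {x0..t} (G k)) / E t" for k t
  have Rc: "continuous_on {x0..} (R k)" for k
  proof -
    have "continuous_on {x0..} (\<lambda>t. integral {x0..t} (G k))"
      by (rule DERIV_continuous_on) (use indef_deriv[OF Gc] in auto)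
    moreover have "\<And>t. E t \<noteq> 0" using Epos by (metis less_irrefl)
    ultimately show ?thesis unfolding R_def
      by (auto intro!: continuous_intros Ec)
  qed
  have intbound: "\<bar>integral {x0..t} (G k)\<bar> \<le> \<Lambda> t + norm k * ((E t - 1) / 2)" if "t \<ge> x0" for t k
  proof -
    have "norm (integral {x0..t} (G k)) \<le> integral {x0..t} (\<lambda>\<tau>. L \<tau> + norm k * (L \<tau> * E \<tau>))"
    proof (rule integral_norm_bound_integral)
      show "G k integrable_on {x0..t}" by (rule cont_int_Icc[OF Gc])
      show "(\<lambda>\<tau>. L \<tau> + norm k * (L \<tau> * E \<tau>)) integrable_on {x0..t}"
        by (rule cont_int_Icc) (intro continuous_intros Lc LEc)
      fix \<tau> assume \<tau>: "\<tau> \<in> {x0..t}"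
      have "\<bar>G k \<tau>\<bar> \<le> L \<tau> * (1 + \<bar>E \<tau> * apply_bcontfun k \<tau>\<bar>)"
        unfolding G_def by (rule Gr) (use \<tau> in auto)
      also have "\<bar>E \<tau> * apply_bcontfun k \<tau>\<bar> \<le> E \<tau> * norm k"
        using norm_bounded[of k \<tau>] Epos[of \<tau>] by (simp add: abs_mult mult_left_mono)
      hence "L \<tau> * (1 + \<bar>E \<tau> * apply_bcontfun k \<tau>\<bar>) \<le> L \<tau> * (1 + E \<tau> * norm k)"
        using L0[of \<tau>] \<tau> by (intro mult_left_mono) auto
      finally show "norm (G k \<tau>) \<le> L \<tau> + norm k * (L \<tau> * E \<tau>)"
        by (simp add: algebra_simps)
    qed
    also have "\<dots> = integral {x0..t} L + integral {x0..t} (\<lambda>\<tau>. norm k * (L \<tau> * E \<tau>))"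
      by (rule integral_add) (rule cont_int_Icc, intro continuous_intros Lc LEc)+
    also have "\<dots> = \<Lambda> t + norm k * ((E t - 1) / 2)"
      using intLE[OF that] by (simp add: \<Lambda>_def)
    finally show ?thesis by simp
  qed
  have Rbound: "\<bar>R k t\<bar> \<le> \<bar>y0\<bar> + 1 + norm k / 2" if "t \<ge> x0" for t k
  proof -
    have "\<bar>y0 + integral {x0..t} (G k)\<bar> \<le> \<bar>y0\<bar> + \<Lambda> t + norm k * ((E t - 1) / 2)"
      using intbound[OF that, of k] by linarith
    also have "\<dots> \<le> (\<bar>y0\<bar> + 1 + norm k / 2) * E t"
    proof -
      have a: "\<bar>y0\<bar> \<le> \<bar>y0\<bar> * E t" using mult_left_mono[OF Ege[OF that], of "\<bar>y0\<bar>"] by simp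
      have b: "norm k * ((E t - 1)/2) \<le> norm k / 2 * E t" using norm_ge_zero[of k] by (simp add: algebra_simps)
      have c: "(\<bar>y0\<bar> + 1 + norm k / 2) * E t = \<bar>y0\<bar> * E t + E t + norm k / 2 * E t" by (simp add: algebra_simps)
      show ?thesis using a b c \<Lambda>E[OF that] by linarith
    qed
    finally show ?thesis unfolding R_def using Epos[of t]
      by (simp add: abs_div pos_divide_le_eq)
  qed
  define T where "T k = Bcontfun (\<lambda>t. R k (max t x0))" for k
  have Tin: "(\<lambda>t. R k (max t x0)) \<in> bcontfun" for k
  proof (rule bcontfun_normI)
    show "continuous_on UNIV (\<lambda>t. R k (max t x0))"
      by (rule continuous_on_compose2[OF Rc[of k]]) (auto intro!: continuous_intros)
    show "norm (R k (max t x0)) \<le> \<bar>y0\<bar> + 1 + norm k / 2" for t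
      using Rbound[of "max t x0" k] by simp
  qed
  have Tapp: "apply_bcontfun (T k) t = R k (max t x0)" for k t
    unfolding T_def using Tin[of k] by (simp add: Bcontfun_inverse)
  have contr: "dist (T k1) (T k2) \<le> (1/2) * dist k1 k2" for k1 k2
  proof (rule dist_bound)
    fix t
    define t' where "t' = max t x0"
    have t': "t' \<ge> x0" unfolding t'_def by simp
    have "\<bar>integral {x0..t'} (G k1) - integral {x0..t'} (G k2)\<bar> 
        = \<bar>integral {x0..t'} (\<lambda>\<tau>. G k1 \<tau> - G k2 \<tau>)\<bar>"
      using cont_int_Icc[OF Gc[of k1]] cont_int_Icc[OF Gc[of k2]] by (simp add: integral_diff)
    also have "\<dots> \<le> integral {x0..t'} (\<lambda>\<tau>. dist k1 k2 * (L \<tau> * E \<tau>))"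
    proof -
    have "norm (integral {x0..t'} (\<lambda>\<tau>. G k1 \<tau> - G k2 \<tau>)) \<le> integral {x0..t'} (\<lambda>\<tau>. dist k1 k2 * (L \<tau> * E \<tau>))"
    proof (rule integral_norm_bound_integral)
      show "(\<lambda>\<tau>. G k1 \<tau> - G k2 \<tau>) integrable_on {x0..t'}"
        by (rule cont_int_Icc) (intro continuous_intros Gc)
      show "(\<lambda>\<tau>. dist k1 k2 * (L \<tau> * E \<tau>)) integrable_on {x0..t'}"
        by (rule cont_int_Icc) (intro continuous_intros LEc)
      fix \<tau> assume \<tau>: "\<tau> \<in> {x0..t'}"
      have "\<bar>G k1 \<tau> - G k2 \<tau>\<bar> \<le> L \<tau> * \<bar>E \<tau> * apply_bcontfun k1 \<tau> - E \<tau> * apply_bcontfun k2 \<tau>\<bar>"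
        unfolding G_def by (rule Lip) (use \<tau> in auto)
      also have "\<bar>E \<tau> * apply_bcontfun k1 \<tau> - E \<tau> * apply_bcontfun k2 \<tau>\<bar> \<le> E \<tau> * dist k1 k2"
        using dist_bounded[of k1 \<tau> k2] Epos[of \<tau>]
        by (simp add: dist_real_def abs_mult flip: right_diff_distrib mult_left_mono)
      hence "L \<tau> * \<bar>E \<tau> * apply_bcontfun k1 \<tau> - E \<tau> * apply_bcontfun k2 \<tau>\<bar> \<le> L \<tau> * (E \<tau> * dist k1 k2)"
        using L0[of \<tau>] \<tau> by (intro mult_left_mono) auto
      finally show "norm (G k1 \<tau> - G k2 \<tau>) \<le> dist k1 k2 * (L \<tau> * E \<tau>)"
        by (simp add: algebra_simps)
    qed
    thus ?thesis by simp
    qed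
    also have "\<dots> = dist k1 k2 * ((E t' - 1) / 2)"
      using intLE[OF t'] cont_int_Icc[OF LEc] by simp
    finally have "\<bar>integral {x0..t'} (G k1) - integral {x0..t'} (G k2)\<bar> \<le> dist k1 k2 * ((E t' - 1) / 2)" .
    moreover have "dist k1 k2 * ((E t' - 1) / 2) \<le> (1/2 * dist k1 k2) * E t'"
      using zero_le_dist[of k1 k2] Epos[of t'] by (simp add: algebra_simps)
    ultimately have "\<bar>integral {x0..t'} (G k1) - integral {x0..t'} (G k2)\<bar> \<le> (1/2 * dist k1 k2) * E t'"
      by linarith
    moreover have "R k1 t' - R k2 t' = (integral {x0..t'} (G k1) - integral {x0..t'} (G k2)) / E t'"
      unfolding R_def using Epos[of t'] by (simp add: field_simps)
    ultimately have "\<bar>R k1 t' - R k2 t'\<bar> \<le> 1/2 * dist k1 k2"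
      using Epos[of t'] by (simp add: abs_div pos_divide_le_eq)
    thus "dist (apply_bcontfun (T k1) t) (apply_bcontfun (T k2) t) \<le> 1/2 * dist k1 k2"
      by (simp add: Tapp dist_real_def t'_def)
  qed
  obtain k where k: "T k = k"
    using banach_fix_type[of "1/2" T] contr by auto
  define g where "g t = E t * apply_bcontfun k t" for t
  have geq: "g t = y0 + integral {x0..t} (G k)" if "t \<ge> x0" for t
  proof -
    have "apply_bcontfun k t = R k t" using Tapp[of k t] k that by (simp add: max_def)
    thus ?thesis unfolding g_def R_def using Epos[of t] by simp
  qed
  have GF: "G k t = F t (g t)" for t unfolding G_def g_def by simp
  show ?thesis
  proof (intro exI conjI allI impI)
    show "g x0 = y0" using geq[of x0] by simp
    fix t assume t: "t \<ge> x0"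
    have "((\<lambda>t. y0 + integral {x0..t} (G k)) has_real_derivative G k t) (at t within {x0..})"
      using indef_deriv[OF Gc t] by (auto intro!: derivative_eq_intros)
    hence "(g has_real_derivative G k t) (at t within {x0..})"
      by (rule has_field_derivative_transform_within[where d=1]) (use t geq in auto)
    thus "(g has_real_derivative F t (g t)) (at t within {x0..})" by (simp add: GF)
  qed
qed




lemma powr_deriv:
  fixes x r :: real
  assumes "x > 0"
  shows "((\<lambda>z. z powr r) has_real_derivative r * (x powr r / x)) (at x within S)"
proof -
  have "x powr (r - 1) = x powr r / x" using assms by (simp add: powr_diff)
  thus ?thesis using has_real_derivative_powr[OF assms, of r]
    by (simp add: has_field_derivative_at_within)
qed

lemma powr_q:
  fixes x s :: real
  assumes "x > 0"
  shows "x powr (1 + 2 / s) = x / (x powr (-1/s) * x powr (-1/s))"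
proof -
  have "x powr (-1/s) * x powr (-1/s) = x powr (-2/s)" by (simp add: powr_add[symmetric])
  moreover have "x powr (-2/s) = 1 / x powr (2/s)" by (simp add: powr_minus_divide[symmetric])
  moreover have "x powr (1 + 2/s) = x * x powr (2/s)" using assms by (simp add: powr_add)
  ultimately show ?thesis using assms by (simp add: field_simps)
qed

lemma P_cont:
  assumes "C2_on_nonneg P"
  shows "continuous_on {0..} P"
proof -
  from assms obtain P1 where "\<forall>x\<ge>0. (P has_real_derivative P1 x) (at x within {0..})"
    unfolding C2_on_nonneg_def by blast
  thus ?thesis by (intro DERIV_continuous_on[where D=P1]) auto
qed

lemma forward:
  fixes s :: real and P g :: "real \<Rightarrow> real"
  assumes s: "s > 0" and Pc: "continuous_on {0..} P" and Ppos: "\<And>x. x > 0 \<Longrightarrow> P x > 0"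
    and x0: "x0 > 0" and sol: "global_pos_solution s P x0 g"
  shows "(\<lambda>z. P z / z powr (1 + 2 / s)) integrable_on {x0..}"
proof -
  define r where "r = -1/s"
  define p where "p x = x powr r" for x
  define f where "f z = P z / z powr (1 + 2 / s)" for z
  have gpos: "g x > 0" if "x \<ge> x0" for x using sol that unfolding global_pos_solution_def by auto
  have gd: "(g has_real_derivative (g x + g x * g x - P x) / (s * x * g x)) (at x within {x0..})"
    if "x \<ge> x0" for x
    using sol that unfolding global_pos_solution_def ode_rhs_def by (auto simp: power2_eq_square)
  have pd: "(p has_real_derivative r * (p x / x)) (at x within {x0..})" if "x \<ge> x0" for x
    unfolding p_def using powr_deriv[of x r] that x0 by simp
  have ppos: "p x > 0" if "x \<ge> x0" for x unfolding p_def using that x0 by simp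
  have fp: "f x = P x * (p x * p x) / x" if "x \<ge> x0" for x
    unfolding f_def p_def r_def using powr_q[of x s] that x0 by simp
  have Pc': "continuous_on {x0..} P" using Pc by (rule continuous_on_subset) (use x0 in auto)
  have fc: "continuous_on {x0..} f"
    unfolding f_def using x0 by (intro continuous_intros Pc') auto
  have fnn: "f x \<ge> 0" if "x \<ge> x0" for x
    unfolding f_def using Ppos[of x] that x0 by (intro divide_nonneg_pos) auto
  define B where "B = (g x0 + 1) * p x0"
  have step1: "(g x + 1) * p x \<le> B" if "x \<ge> x0" for x
  proof -
    have "- ((g x0 + 1) * p x0) \<le> - ((g x + 1) * p x)"
    proof (rule mono_from_deriv[where f="\<lambda>x. - ((g x + 1) * p x)" and f'="\<lambda>x. p x * P x / (s * x * g x)"])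
      fix t assume t: "t \<ge> x0"
      have d: "((\<lambda>x. - ((g x + 1) * p x)) has_real_derivative
          - (((g t + g t * g t - P t) / (s * t * g t) + 0) * p t + r * (p t / t) * (g t + 1)))
          (at t within {x0..})"
        by (intro DERIV_minus DERIV_mult DERIV_add gd pd DERIV_const t)
      show "((\<lambda>x. - ((g x + 1) * p x)) has_real_derivative p t * P t / (s * t * g t)) (at t within {x0..})"
      proof (rule DERIV_cong[OF d])
        show "- (((g t + g t * g t - P t) / (s * t * g t) + 0) * p t + r * (p t / t) * (g t + 1)) =
              p t * P t / (s * t * g t)"
          using s x0 t gpos[OF t] unfolding r_def by (simp add: field_simps; simp add: algebra_simps)
      qed
      show "p t * P t / (s * t * g t) \<ge> 0"
        using s x0 t gpos[OF t] ppos[OF t] Ppos[of t]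
        by (intro divide_nonneg_pos mult_nonneg_nonneg mult_pos_pos) auto
    qed (use that in auto)
    thus ?thesis unfolding B_def by simp
  qed
  have gB: "g x * p x \<le> B" if "x \<ge> x0" for x
    using step1[OF that] ppos[OF that] by (simp add: algebra_simps)
  have B0: "B \<ge> 0" unfolding B_def using gpos[of x0] ppos[of x0] by simp
  define Ip where "Ip x = integral {x0..x} f" for x
  define \<Phi> where "\<Phi> x = Ip x + (s/2) * (g x * g x * (p x * p x)) + B * s * p x" for x
  have Ipd: "(Ip has_real_derivative f x) (at x within {x0..})" if "x \<ge> x0" for x
    unfolding Ip_def by (rule indef_deriv[OF fc that])
  have bound: "Ip X \<le> \<Phi> x0" if X: "X \<ge> x0" for X
  proof -
    have "- \<Phi> x0 \<le> - \<Phi> X"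
    proof (rule mono_from_deriv[where f="\<lambda>x. - \<Phi> x" and f'="\<lambda>x. (B * p x - g x * (p x * p x)) / x"])
      fix t assume t: "t \<ge> x0"
      have d: "((\<lambda>x. - \<Phi> x) has_real_derivative
         - (f t + (s/2) * ((((g t + g t * g t - P t) / (s * t * g t)) * g t + ((g t + g t * g t - P t) / (s * t * g t)) * g t) * (p t * p t)
              + (r * (p t / t) * p t + r * (p t / t) * p t) * (g t * g t))
            + B * s * (r * (p t / t))))
         (at t within {x0..})"
        unfolding \<Phi>_def
        by (intro DERIV_minus DERIV_add DERIV_mult DERIV_cmult gd pd Ipd t)
      show "((\<lambda>x. - \<Phi> x) has_real_derivative (B * p t - g t * (p t * p t)) / t) (at t within {x0..})"
      proof (rule DERIV_cong[OF d])
        show "- (f t + (s/2) * ((((g t + g t * g t - P t) / (s * t * g t)) * g t + ((g t + g t * g t - P t) / (s * t * g t)) * g t) * (p t * p t)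
              + (r * (p t / t) * p t + r * (p t / t) * p t) * (g t * g t))
            + B * s * (r * (p t / t))) = (B * p t - g t * (p t * p t)) / t"
          using s x0 t gpos[OF t] unfolding r_def fp[OF t]
          by (simp add: field_simps; simp add: algebra_simps)
      qed
      have "g t * (p t * p t) \<le> B * p t"
        using mult_right_mono[OF gB[OF t], of "p t"] ppos[OF t] by (simp add: algebra_simps)
      thus "(B * p t - g t * (p t * p t)) / t \<ge> 0" using t x0 by simp
    qed (use X in auto)
    moreover have "(s/2) * (g X * g X * (p X * p X)) \<ge> 0" using s by simp
    moreover have "B * s * p X \<ge> 0" using B0 s ppos[OF X] by simp
    ultimately show ?thesis unfolding \<Phi>_def by linarith
  qed
  show ?thesis
    using nonneg_integrable_Ici[OF fc fnn bound[unfolded Ip_def]] unfolding f_def by simp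
qed




lemma rho_lip: "\<bar>min (max u 0) 1 - min (max v 0) 1\<bar> \<le> \<bar>u - v\<bar>" for u v :: real
  by (simp add: min_def max_def)

lemma inv_lip:
  fixes u v c :: real
  assumes "c \<ge> 0"
  shows "\<bar>c / max u 1 - c / max v 1\<bar> \<le> c * \<bar>u - v\<bar>"
proof -
  have mu: "max u 1 \<ge> 1" and mv: "max v 1 \<ge> 1" by auto
  have "c / max u 1 - c / max v 1 = c * (max v 1 - max u 1) / (max u 1 * max v 1)"
    using mu mv by (simp add: field_simps)
  hence "\<bar>c / max u 1 - c / max v 1\<bar> = c * \<bar>max v 1 - max u 1\<bar> / (max u 1 * max v 1)"
    using assms mu mv by (simp add: abs_mult abs_div)
  also have "\<dots> \<le> c * \<bar>max v 1 - max u 1\<bar>"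
  proof -
    have m: "1 \<le> max u 1 * max v 1" using mult_mono[OF mu mv] by simp
    have "c * \<bar>max v 1 - max u 1\<bar> \<le> c * \<bar>max v 1 - max u 1\<bar> * (max u 1 * max v 1)"
      using mult_left_mono[OF m, of "c * \<bar>max v 1 - max u 1\<bar>"] assms by simp
    thus ?thesis using m by (simp add: divide_le_eq)
  qed
  also have "\<bar>max v 1 - max u 1\<bar> \<le> \<bar>u - v\<bar>" by (simp add: max_def abs_minus_commute)
  hence "c * \<bar>max v 1 - max u 1\<bar> \<le> c * \<bar>u - v\<bar>" using assms by (intro mult_left_mono)
  finally show ?thesis .
qed

lemma key_nonneg:
  fixes u c :: real
  assumes "c \<ge> 0"
  shows "u * min (max u 0) 1 - u * c / max u 1 + c \<ge> 0"
proof (cases "u < 0")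
  case True
  hence "u * min (max u 0) 1 - u * c / max u 1 + c = c - u * c" by (simp add: min_def max_def)
  moreover have "- u * c \<ge> 0" using True assms by (simp add: mult_nonpos_nonneg)
  ultimately show ?thesis using assms by linarith
next
  case False
  show ?thesis
  proof (cases "u \<le> 1")
    case True
    hence "min (max u 0) 1 = u" "max u 1 = 1" using False by auto
    hence eq: "u * min (max u 0) 1 - u * c / max u 1 + c = u * u + (1 - u) * c" by (simp add: algebra_simps)
    have "(1 - u) * c \<ge> 0" using True assms by simp
    moreover have "u * u \<ge> 0" by simp
    ultimately show ?thesis unfolding eq by linarith
  next
    case False2: False
    hence "min (max u 0) 1 = 1" "max u 1 = u" by auto
    thus ?thesis using False2 assms by simp
  qed
qed

lemma backward:
  fixes s :: real and P :: "real \<Rightarrow> real"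
  assumes s: "s > 0" and Pc: "continuous_on {0..} P" and Ppos: "\<And>x. x > 0 \<Longrightarrow> P x > 0"
    and x0: "x0 > 0" and int: "(\<lambda>z. P z / z powr (1 + 2 / s)) integrable_on {x0..}"
  shows "\<exists>\<gamma>0>0. \<exists>g. g x0 = \<gamma>0 \<and> global_pos_solution s P x0 g"
proof -
  define r where "r = -1/s"
  define p where "p x = x powr r" for x
  define f where "f z = P z / z powr (1 + 2 / s)" for z
  have Pnn: "P x \<ge> 0" if "x \<ge> x0" for x using Ppos[of x] that x0 by simp
  have pd: "(p has_real_derivative r * (p x / x)) (at x within {x0..})" if "x \<ge> x0" for x
    unfolding p_def using powr_deriv[of x r] that x0 by simp
  have ppos: "p x > 0" if "x \<ge> x0" for x unfolding p_def using that x0 by simp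
  have fp: "f x = P x * (p x * p x) / x" if "x \<ge> x0" for x
    unfolding f_def p_def r_def using powr_q[of x s] that x0 by simp
  have Pc': "continuous_on {x0..} P" using Pc by (rule continuous_on_subset) (use x0 in auto)
  have fc: "continuous_on {x0..} f"
    unfolding f_def using x0 by (intro continuous_intros Pc') auto
  have fnn: "f x \<ge> 0" if "x \<ge> x0" for x
    unfolding f_def using Ppos[of x] that x0 by (intro divide_nonneg_pos) auto
  have fint: "f integrable_on {x0..}" using int unfolding f_def .
  define I where "I = integral {x0..} f"
  have I0: "I \<ge> 0" unfolding I_def by (rule integral_nonneg[OF fint]) (use fnn in auto)
  define \<gamma>0 where "\<gamma>0 = sqrt ((2/s) * I / (p x0 * p x0) + 2)"
  have \<gamma>0pos: "\<gamma>0 > 0" unfolding \<gamma>0_def using s I0 ppos[of x0] by (intro real_sqrt_gt_zero add_nonneg_pos) auto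
  have \<gamma>0sq: "\<gamma>0 * \<gamma>0 * (p x0 * p x0) = (2/s) * I + 2 * (p x0 * p x0)"
  proof -
    have "\<gamma>0 * \<gamma>0 = (2/s) * I / (p x0 * p x0) + 2"
    proof -
      have "2/s * I / (p x0 * p x0) \<ge> 0" using s I0 by simp
      thus ?thesis unfolding \<gamma>0_def by (simp add: real_sqrt_mult_self)
    qed
    thus ?thesis using ppos[of x0] by (simp add: field_simps)
  qed
  define N where "N t u = min (max u 0) 1 + u - P t / max u 1" for t u
  define F where "F t u = N t u / (s * t)" for t u
  define L where "L t = (2 + P t) / (s * x0)" for t
  have Fc: "continuous_on ({x0..} \<times> UNIV) (\<lambda>(t,u). F t u)"
  proof -
    have PF: "continuous_on ({x0..} \<times> (UNIV::real set)) (\<lambda>z. P (fst z))"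
      by (rule continuous_on_compose2[OF Pc']) (auto intro!: continuous_intros)
    have mx: "\<And>z. max (snd z) (1::real) \<noteq> 0" by (metis max.cobounded2 not_one_le_zero)
    have "continuous_on ({x0..} \<times> UNIV)
       (\<lambda>z. (min (max (snd z) 0) 1 + snd z - P (fst z) / max (snd z) 1) / (s * fst z))"
      using s x0 mx by (intro continuous_intros PF) auto
    thus ?thesis unfolding F_def N_def split_def .
  qed
  have Lc: "continuous_on {x0..} L" unfolding L_def using s x0 by (intro continuous_intros Pc') auto
  have L0: "L t \<ge> 0" if "t \<ge> x0" for t unfolding L_def using Pnn[OF that] s x0 by simp
  have divmono: "a / (s * t) \<le> a / (s * x0)" if "a \<ge> 0" "t \<ge> x0" for a t
    using that s x0 by (intro divide_left_mono) auto
  have Lip: "\<bar>F t u - F t v\<bar> \<le> L t * \<bar>u - v\<bar>" if t: "t \<ge> x0" for t u v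
  proof -
    have "\<bar>N t u - N t v\<bar> \<le> (2 + P t) * \<bar>u - v\<bar>"
      using rho_lip[of u v] inv_lip[OF Pnn[OF t], of u v] unfolding N_def
      by (simp add: algebra_simps) (smt (verit))
    moreover have "F t u - F t v = (N t u - N t v) / (s * t)" unfolding F_def by (simp add: diff_divide_distrib)
    ultimately have "\<bar>F t u - F t v\<bar> \<le> (2 + P t) * \<bar>u - v\<bar> / (s * t)"
      using s x0 t by (simp add: abs_div divide_right_mono)
    also have "\<dots> \<le> (2 + P t) * \<bar>u - v\<bar> / (s * x0)"
      using Pnn[OF t] t by (intro divmono) auto
    finally show ?thesis unfolding L_def by simp
  qed
  have Gr: "\<bar>F t u\<bar> \<le> L t * (1 + \<bar>u\<bar>)" if t: "t \<ge> x0" for t u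
  proof -
    have mu: "max u 1 \<ge> 1" by simp
    have "P t * 1 \<le> P t * max u 1" using mult_left_mono[OF mu Pnn[OF t]] .
    hence a: "0 \<le> P t / max u 1" "P t / max u 1 \<le> P t"
      using Pnn[OF t] mu by (auto simp: divide_le_eq)
    have "\<bar>N t u\<bar> \<le> 1 + \<bar>u\<bar> + P t" unfolding N_def using a
      by (simp add: min_def max_def) (smt (verit))
    also have "\<dots> \<le> (2 + P t) * (1 + \<bar>u\<bar>)" using Pnn[OF t] by (simp add: algebra_simps)
    finally have "\<bar>F t u\<bar> \<le> (2 + P t) * (1 + \<bar>u\<bar>) / (s * t)"
      unfolding F_def using s x0 t by (simp add: abs_div divide_right_mono)
    also have "\<dots> \<le> (2 + P t) * (1 + \<bar>u\<bar>) / (s * x0)"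
      using Pnn[OF t] t by (intro divmono) auto
    finally show ?thesis unfolding L_def by simp
  qed
  obtain g where g0: "g x0 = \<gamma>0"
    and gd: "\<And>t. t \<ge> x0 \<Longrightarrow> (g has_real_derivative F t (g t)) (at t within {x0..})"
    using ode_exists[OF Fc Lc L0 Lip Gr, of \<gamma>0] by blast
  have gc: "continuous_on {x0..} g" by (rule DERIV_continuous_on) (use gd in auto)
  define Ip where "Ip x = integral {x0..x} f" for x
  have Ipd: "(Ip has_real_derivative f x) (at x within {x0..})" if "x \<ge> x0" for x
    unfolding Ip_def by (rule indef_deriv[OF fc that])
  define \<psi> where "\<psi> x = g x * g x * (p x * p x) + (2/s) * Ip x" for x
  have sq2: "g X * g X \<ge> 2" if X: "X \<ge> x0" for X
  proof -
    have "\<psi> x0 \<le> \<psi> X"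
    proof (rule mono_from_deriv[where f="\<psi>" and
          f'="\<lambda>t. (2/s) * (p t * p t / t) * (g t * min (max (g t) 0) 1 - g t * P t / max (g t) 1 + P t)"])
      fix t assume t: "t \<ge> x0"
      have d: "(\<psi> has_real_derivative
         (F t (g t) * g t + F t (g t) * g t) * (p t * p t) + (r * (p t / t) * p t + r * (p t / t) * p t) * (g t * g t)
          + (2/s) * f t) (at t within {x0..})"
        unfolding \<psi>_def by (intro DERIV_add DERIV_mult DERIV_cmult gd pd Ipd t)
      show "(\<psi> has_real_derivative (2/s) * (p t * p t / t) * (g t * min (max (g t) 0) 1 - g t * P t / max (g t) 1 + P t))
          (at t within {x0..})"
      proof (rule DERIV_cong[OF d])
        have m: "max (g t) 1 \<noteq> 0" by (metis max.cobounded2 not_one_le_zero)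
        show "(F t (g t) * g t + F t (g t) * g t) * (p t * p t) + (r * (p t / t) * p t + r * (p t / t) * p t) * (g t * g t)
          + (2/s) * f t = (2/s) * (p t * p t / t) * (g t * min (max (g t) 0) 1 - g t * P t / max (g t) 1 + P t)"
          using s x0 t m unfolding r_def fp[OF t] F_def N_def
          by (simp add: field_simps; simp add: algebra_simps)
      qed
      show "(2/s) * (p t * p t / t) * (g t * min (max (g t) 0) 1 - g t * P t / max (g t) 1 + P t) \<ge> 0"
        using key_nonneg[OF Pnn[OF t], of "g t"] s t x0 by simp
    qed (use X in auto)
    moreover have "Ip X \<le> I" unfolding Ip_def I_def
      by (rule integral_subset_le) (use cont_int_Icc[OF fc] fint fnn in auto)
    moreover have "Ip x0 = 0" unfolding Ip_def by simp
    ultimately have "g X * g X * (p X * p X) \<ge> 2 * (p x0 * p x0)"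
    proof -
      assume h1: "\<psi> x0 \<le> \<psi> X" and h2: "Ip X \<le> I" and h3: "Ip x0 = 0"
      have "(2/s) * Ip X \<le> (2/s) * I" using h2 s by (intro mult_left_mono) auto
      thus ?thesis using h1 h3 \<gamma>0sq g0 unfolding \<psi>_def by simp
    qed
    moreover have "p X \<le> p x0" unfolding p_def r_def using s x0 X by (intro powr_mono2') auto
    hence "p X * p X \<le> p x0 * p x0" using ppos[OF X] by (intro mult_mono) auto
    ultimately have "(g X * g X) * (p X * p X) \<ge> 2 * (p X * p X)"
      using ppos[OF X] by (smt (verit) mult_left_mono)
    thus ?thesis using ppos[OF X] by (simp add: mult_le_cancel_right)
  qed
  have gpos: "g X > 0" if X: "X \<ge> x0" for X
  proof (rule ccontr)
    assume "\<not> g X > 0"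
    hence "g X \<le> 0" by simp
    moreover have "continuous_on {x0..X} g" using gc by (rule continuous_on_subset) auto
    ultimately obtain x where x: "x0 \<le> x" "x \<le> X" "g x = 0"
      using IVT2'[of g X 0 x0] g0 \<gamma>0pos X by auto
    thus False using sq2[of x] by simp
  qed
  have gge1: "g X \<ge> 1" if X: "X \<ge> x0" for X
  proof (rule ccontr)
    assume "\<not> g X \<ge> 1"
    hence "g X * g X < 1 * 1" using gpos[OF X] by (intro mult_strict_mono) auto
    thus False using sq2[OF X] by simp
  qed
  have Fode: "F X (g X) = ode_rhs s P X (g X)" if X: "X \<ge> x0" for X
  proof -
    have "min (max (g X) 0) 1 = 1" "max (g X) 1 = g X" using gge1[OF X] by auto
    thus ?thesis unfolding F_def N_def ode_rhs_def using gpos[OF X] s x0 X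
      by (simp add: field_simps power2_eq_square)
  qed
  show ?thesis
  proof (intro exI conjI)
    show "\<gamma>0 > 0" by (rule \<gamma>0pos)
    show "g x0 = \<gamma>0" by (rule g0)
    show "global_pos_solution s P x0 g"
      unfolding global_pos_solution_def using gpos gd Fode by auto
  qed
qed


theorem theorem1:
  fixes s :: real and P :: "real \<Rightarrow> real"
  assumes "s > 0"
    and "C2_on_nonneg P"
    and "\<And>x. x > 0 \<Longrightarrow> P x > 0"
  shows "(\<exists>x0 > 0. \<exists>\<gamma>0 > 0. \<exists>g. g x0 = \<gamma>0 \<and> global_pos_solution s P x0 g)
     \<longleftrightarrow> (\<exists>x0 > 0. (\<lambda>z. P z / z powr (1 + 2 / s)) integrable_on {x0..})"
proof
  have Pc: "continuous_on {0..} P" by (rule P_cont[OF assms(2)])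
  show "(\<exists>x0 > 0. \<exists>\<gamma>0 > 0. \<exists>g. g x0 = \<gamma>0 \<and> global_pos_solution s P x0 g) \<Longrightarrow>
        (\<exists>x0 > 0. (\<lambda>z. P z / z powr (1 + 2 / s)) integrable_on {x0..})"
    using forward[OF assms(1) Pc assms(3)] by blast
  show "(\<exists>x0 > 0. (\<lambda>z. P z / z powr (1 + 2 / s)) integrable_on {x0..}) \<Longrightarrow>
        (\<exists>x0 > 0. \<exists>\<gamma>0 > 0. \<exists>g. g x0 = \<gamma>0 \<and> global_pos_solution s P x0 g)"
    using backward[OF assms(1) Pc assms(3)] by blast
qed

end
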